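(* Over a field of characteristic $0$, write $[a,b]=ab-ba$ and $\{a,b\}=ab+ba$. An algebra is left-symmetric and satisfies $(ab)c-(ba)c-(ac)b+(ca)b+(bc)a-(cb)a=0$ if and only if, in terms of $[\cdot,\cdot]$ and $\{\cdot,\cdot\}$, it satisfies \[ [[a,b],c]+[[b,c],a]+[[c,a],b]=0, \] \[ \{\{a,b\},c\}=-\{[a,b],c\}-2\{[a,c],b\}+[\{a,b\},c]-[[a,c],b]+\{a,\{b,c\}\}-\{a,[b,c]\}+[a,\{b,c\}], \] and \[ \{[a,b],c\}+\{[b,c],a\}+\{[c,a],b\}=0. \]
   Context: A left-symmetric algebra is an algebra whose associator $(a,b,c)=(ab)c-a(bc)$ satisfies $(a,b,c)=(b,a,c)$. The statement is the polarization (Markl–Remm) of this variety. *)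

theory Defs
  imports Complex_Main
begin

definition is_algebra :: "('k::field \<Rightarrow> 'v::ab_group_add \<Rightarrow> 'v) \<Rightarrow> ('v \<Rightarrow> 'v \<Rightarrow> 'v) \<Rightarrow> bool" where
  "is_algebra scale m \<longleftrightarrow> vector_space scale
     \<and> (\<forall>x y z. m (x + y) z = m x z + m y z)
     \<and> (\<forall>x y z. m x (y + z) = m x y + m x z)
     \<and> (\<forall>c x y. m (scale c x) y = scale c (m x y))
     \<and> (\<forall>c x y. m x (scale c y) = scale c (m x y))"

definition assoc :: "('v \<Rightarrow> 'v \<Rightarrow> 'v) \<Rightarrow> 'v \<Rightarrow> 'v \<Rightarrow> 'v \<Rightarrow> 'v::ab_group_add" where
  "assoc m a b c = m (m a b) c - m a (m b c)"

definition left_symmetric :: "('v \<Rightarrow> 'v \<Rightarrow> 'v::ab_group_add) \<Rightarrow> bool" where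
  "left_symmetric m \<longleftrightarrow> (\<forall>a b c. assoc m a b c = assoc m b a c)"

definition comm :: "('v \<Rightarrow> 'v \<Rightarrow> 'v) \<Rightarrow> 'v \<Rightarrow> 'v \<Rightarrow> 'v::ab_group_add" where
  "comm m a b = m a b - m b a"

definition acomm :: "('v \<Rightarrow> 'v \<Rightarrow> 'v) \<Rightarrow> 'v \<Rightarrow> 'v \<Rightarrow> 'v::ab_group_add" where
  "acomm m a b = m a b + m b a"

end

theory Submission
  imports Defs
begin

lemma bil:
  assumes "is_algebra scale m"
  shows "m (x - y) z = m x z - m y z" "m z (x - y) = m z x - m z y"
    "m (- x) z = - m x z" "m z (- x) = - m z x"
    "m (x + y) z = m x z + m y z" "m z (x + y) = m z x + m z y"
proof -
  have l: "\<And>x y z. m (x + y) z = m x z + m y z" and r: "\<And>x y z. m x (y + z) = m x y + m x z"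
    using assms unfolding is_algebra_def by auto
  have n1: "m (- x) z = - m x z" for x z
    using l[of x "- x" z] l[of 0 0 z] by (simp add: eq_neg_iff_add_eq_0 add.commute)
  have n2: "m z (- x) = - m z x" for x z
    using r[of z x "- x"] r[of z 0 0] by (simp add: eq_neg_iff_add_eq_0 add.commute)
  show "m (x - y) z = m x z - m y z" using l[of x "- y" z] n1 by simp
  show "m z (x - y) = m z x - m z y" using r[of z x "- y"] n2 by simp
  show "m (- x) z = - m x z" by (rule n1)
  show "m z (- x) = - m z x" by (rule n2)
  show "m (x + y) z = m x z + m y z" by (rule l)
  show "m z (x + y) = m z x + m z y" by (rule r)
qed

lemma scale2:
  assumes "is_algebra scale m"
  shows "scale (2::'k::field_char_0) x = x + x"
proof -
  interpret vector_space scale using assms unfolding is_algebra_def by auto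
  have "scale (1 + 1) x = scale 1 x + scale 1 x" by (rule scale_left_distrib)
  then show ?thesis by (simp add: one_add_one)
qed

lemma four:
  assumes "is_algebra (scale :: 'k::field_char_0 \<Rightarrow> 'v::ab_group_add \<Rightarrow> 'v) m" and "(x::'v) + x + x + x = 0"
  shows "x = 0"
proof -
  interpret vector_space scale using assms unfolding is_algebra_def by auto
  have "scale 2 x = x + x" by (rule scale2[OF assms(1)])
  have "scale (2 + 2) x = scale 2 x + scale 2 x" by (rule scale_left_distrib)
  then have "scale 4 x = 0" using assms(2) \<open>scale 2 x = x + x\<close> by (simp add: add.assoc)
  then have "scale (1/4) (scale 4 x) = 0" by simp
  then show ?thesis by simp
qed

lemma two:
  assumes "is_algebra (scale :: 'k::field_char_0 \<Rightarrow> 'v::ab_group_add \<Rightarrow> 'v) m" and "(x::'v) + x = 0"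
  shows "x = 0"
proof -
  interpret vector_space scale using assms unfolding is_algebra_def by auto
  have "scale 2 x = 0" using assms(2) scale2[OF assms(1)] by simp
  then have "scale (1/2) (scale 2 x) = 0" by simp
  then show ?thesis by simp
qed

theorem mainTheorem14:
  fixes scale :: "'k::field_char_0 \<Rightarrow> 'v::ab_group_add \<Rightarrow> 'v"
    and m :: "'v \<Rightarrow> 'v \<Rightarrow> 'v"
  assumes "is_algebra scale m"
  shows "(left_symmetric m \<and>
          (\<forall>a b c. m (m a b) c - m (m b a) c - m (m a c) b + m (m c a) b
                     + m (m b c) a - m (m c b) a = 0))
     \<longleftrightarrow>
         (\<forall>a b c.
            comm m (comm m a b) c + comm m (comm m b c) a + comm m (comm m c a) b = 0
          \<and> acomm m (acomm m a b) c =
               - acomm m (comm m a b) c - scale 2 (acomm m (comm m a c) b)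
               + comm m (acomm m a b) c - comm m (comm m a c) b
               + acomm m a (acomm m b c) - acomm m a (comm m b c)
               + comm m a (acomm m b c)
          \<and> acomm m (comm m a b) c + acomm m (comm m b c) a + acomm m (comm m c a) b = 0)"
  (is "?L \<longleftrightarrow> (\<forall>a b c. ?J1 a b c \<and> ?J2 a b c \<and> ?J3 a b c)")
proof -
  note B = bil[OF assms] scale2[OF assms]
  define LS where "LS a b c = m (m a b) c - m a (m b c) - (m (m b a) c - m b (m a c))" for a b c
  define I2 where "I2 a b c = m (m a b) c - m (m b a) c - m (m a c) b + m (m c a) b
                     + m (m b c) a - m (m c b) a" for a b c
  show ?thesis
  proof
  {
    assume L: ?L
    have ls: "LS a b c = 0" for a b c using L unfolding left_symmetric_def assoc_def LS_def by simp
    have i2: "I2 a b c = 0" for a b c using L unfolding I2_def by simp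
    fix a b c
    have "comm m (comm m a b) c + comm m (comm m b c) a + comm m (comm m c a) b
       = LS a b c - LS a c b + LS b c a"
      unfolding LS_def comm_def acomm_def B by (simp add: algebra_simps)
    then have 1: "?J1 a b c" using ls by simp
    have "acomm m (acomm m a b) c - (
               - acomm m (comm m a b) c - scale 2 (acomm m (comm m a c) b)
               + comm m (acomm m a b) c - comm m (comm m a c) b
               + acomm m a (acomm m b c) - acomm m a (comm m b c)
               + comm m a (acomm m b c))
       = LS a b c + LS a c b + LS a c b + LS a c b + LS b c a"
      unfolding LS_def comm_def acomm_def B by (simp add: algebra_simps)
    then have 2: "?J2 a b c" using ls by simp
    have "acomm m (comm m a b) c + acomm m (comm m b c) a + acomm m (comm m c a) b
       = - LS a b c + LS a c b - LS b c a + I2 a b c + I2 a b c"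
      unfolding LS_def I2_def comm_def acomm_def B by (simp add: algebra_simps)
    then have 3: "?J3 a b c" using ls i2 by simp
    note 1 2 3
  }
  then show "?L \<Longrightarrow> \<forall>a b c. ?J1 a b c \<and> ?J2 a b c \<and> ?J3 a b c" by blast
next
  assume H: "\<forall>a b c. ?J1 a b c \<and> ?J2 a b c \<and> ?J3 a b c"
  have ls: "LS a b c = 0" for a b c
  proof (rule four[OF assms])
    have j1: "comm m (comm m a b) c + comm m (comm m b c) a + comm m (comm m c a) b = 0"
      using H by blast
    have j2: "acomm m (acomm m a c) b - (
               - acomm m (comm m a c) b - scale 2 (acomm m (comm m a b) c)
               + comm m (acomm m a c) b - comm m (comm m a b) c
               + acomm m a (acomm m c b) - acomm m a (comm m c b)
               + comm m a (acomm m c b)) = 0"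
      using H by simp
    have "LS a b c + LS a b c + LS a b c + LS a b c =
       (comm m (comm m a b) c + comm m (comm m b c) a + comm m (comm m c a) b) +
       (acomm m (acomm m a c) b - (
               - acomm m (comm m a c) b - scale 2 (acomm m (comm m a b) c)
               + comm m (acomm m a c) b - comm m (comm m a b) c
               + acomm m a (acomm m c b) - acomm m a (comm m c b)
               + comm m a (acomm m c b)))"
      unfolding LS_def comm_def acomm_def B by (simp add: algebra_simps)
    then show "LS a b c + LS a b c + LS a b c + LS a b c = 0" using j1 j2 by simp
  qed
  have i2: "I2 a b c = 0" for a b c
  proof (rule two[OF assms])
    have j1: "comm m (comm m a b) c + comm m (comm m b c) a + comm m (comm m c a) b = 0"
      and j3: "acomm m (comm m a b) c + acomm m (comm m b c) a + acomm m (comm m c a) b = 0"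
      using H by blast+
    have "I2 a b c + I2 a b c =
       (comm m (comm m a b) c + comm m (comm m b c) a + comm m (comm m c a) b) +
       (acomm m (comm m a b) c + acomm m (comm m b c) a + acomm m (comm m c a) b)"
      unfolding I2_def comm_def acomm_def B by (simp add: algebra_simps)
    then show "I2 a b c + I2 a b c = 0" using j1 j3 by simp
  qed
  show ?L using ls i2 unfolding left_symmetric_def assoc_def LS_def I2_def by simp
qed
qed
end
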